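(* For every normed BPA system $\mathcal{G}=(V,\mathit{Act},\mathcal{R})$ (with $V$ linearly ordered) and all $\alpha,\beta\in V^*$: $\mathcal{T}^\mathcal{G}(\alpha)=\mathcal{T}^\mathcal{G}(\beta)$ if and only if $\alpha\sim\beta$ in $\mathcal{L}_\mathcal{G}$.
   Context: BPA system $\mathcal{G}=(V,\mathit{Act},\mathcal{R})$: finite variables $V$, finite actions (possibly with silent $\tau$), rules $A\xrightarrow{a}\alpha$; LTS $\mathcal{L}_\mathcal{G}$ on $V^*$ with $A\beta\xrightarrow{a}\alpha\beta$ for rules $A\xrightarrow{a}\alpha$. Normed: each variable can reach $\varepsilon$. $\sim$: branching bisimilarity in $\mathcal{L}_\mathcal{G}$ (largest relation $\mathcal{B}$ such that for $(s,t)\in\mathcal{B}$ each move $s\xrightarrow{a}s'$ is matched by $a=\tau,(s',t)\in\mathcal{B}$, or by $t=t_0\xrightarrow{\tau}\cdots\xrightarrow{\tau}t_k\xrightarrow{a}t'$ with $(s',t')\in\mathcal{B}$ and $(s,t_i)\in\mathcal{B}$ for $i\in[1,k]$; and symmetrically). Transducers read right to left: $q'\xleftarrow{A/\gamma}q$ means $\Delta(q,A)=(q',\gamma)$, extended to strings by $q\xleftarrow{\varepsilon/\varepsilon}q$ and composition ($q'\xleftarrow{A/\gamma}q$, $q''\xleftarrow{\alpha/\beta}q'$ give $q''\xleftarrow{\alpha A/\beta\gamma}q$); $\mathcal{T}_q(\alpha)$ is the output from $q$ on $\alpha$, $\mathcal{T}(\alpha)=\mathcal{T}_{q_0}(\alpha)$.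 Canonical transducer: $R_\gamma=\{X\in V\mid X\gamma\sim\gamma\}$; prefix $\alpha$ of $\alpha\gamma$ is redundancy-free if not of the form $\delta X\beta$ with $X\beta\gamma\sim\beta\gamma$; $\alpha$ lexicographically smaller than $\beta$ if $\alpha$ is a proper suffix of $\beta$ or $\alpha=\alpha'A\gamma,\beta=\beta'B\gamma$ with $A<B$. $\mathcal{T}^\mathcal{G}=(Q,V,\Delta,q_0)$: $Q=\{R_\gamma\mid\gamma\in V^*\}$, $q_0=R_\varepsilon$, $\Delta(R_\gamma,A)=(R_{A\gamma},\alpha)$ where $\alpha$ is lexicographically smallest among the longest strings with $\alpha\gamma\sim A\gamma$ and $\alpha$ a redundancy-free prefix of $\alpha\gamma$ (well defined, depends only on $R_\gamma$). *)

theory Defs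
  imports Main
begin

(* A BPA system: variables are the elements of a finite linearly ordered type 'v,
   actions are 'a option with None standing for the silent action tau,
   rules are triples (A, a, alpha) meaning A --a--> alpha. *)

type_synonym ('v, 'a) bpa_rules = "('v \<times> 'a option \<times> 'v list) set"

definition bpa_step :: "('v, 'a) bpa_rules \<Rightarrow> 'v list \<Rightarrow> 'a option \<Rightarrow> 'v list \<Rightarrow> bool" where
  "bpa_step R s a t \<longleftrightarrow> (\<exists>A \<alpha> \<beta>. s = A # \<beta> \<and> (A, a, \<alpha>) \<in> R \<and> t = \<alpha> @ \<beta>)"

definition normed :: "('v, 'a) bpa_rules \<Rightarrow> bool" where
  "normed R \<longleftrightarrow> (\<forall>A. (\<lambda>s t. \<exists>a. bpa_step R s a t)\<^sup>*\<^sup>* [A] [])"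

inductive tau_path :: "('v, 'a) bpa_rules \<Rightarrow> ('v list \<times> 'v list) set \<Rightarrow> 'v list \<Rightarrow> 'v list \<Rightarrow> 'v list \<Rightarrow> bool"
  for R B s where
  tp_refl: "tau_path R B s t t"
| tp_step: "tau_path R B s t u \<Longrightarrow> bpa_step R u None u' \<Longrightarrow> (s, u') \<in> B \<Longrightarrow> tau_path R B s t u'"

definition bb_half :: "('v, 'a) bpa_rules \<Rightarrow> ('v list \<times> 'v list) set \<Rightarrow> bool" where
  "bb_half R B \<longleftrightarrow> (\<forall>s t. (s, t) \<in> B \<longrightarrow> (\<forall>a s'. bpa_step R s a s' \<longrightarrow>
      ((a = None \<and> (s', t) \<in> B) \<or>
       (\<exists>tk t'. tau_path R B s t tk \<and> bpa_step R tk a t' \<and> (s', t') \<in> B))))"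

definition branching_bisim :: "('v, 'a) bpa_rules \<Rightarrow> ('v list \<times> 'v list) set \<Rightarrow> bool" where
  "branching_bisim R B \<longleftrightarrow> bb_half R B \<and> bb_half R (B\<inverse>)"

definition bbisim :: "('v, 'a) bpa_rules \<Rightarrow> 'v list \<Rightarrow> 'v list \<Rightarrow> bool" where
  "bbisim R s t \<longleftrightarrow> (\<exists>B. branching_bisim R B \<and> (s, t) \<in> B)"

definition Rset :: "('v, 'a) bpa_rules \<Rightarrow> 'v list \<Rightarrow> 'v set" where
  "Rset R \<gamma> = {X. bbisim R (X # \<gamma>) \<gamma>}"

definition redfree :: "('v, 'a) bpa_rules \<Rightarrow> 'v list \<Rightarrow> 'v list \<Rightarrow> bool" where
  "redfree R \<gamma> \<alpha> \<longleftrightarrow> \<not> (\<exists>\<delta> X \<beta>. \<alpha> = \<delta> @ X # \<beta> \<and> bbisim R (X # \<beta> @ \<gamma>) (\<beta> @ \<gamma>))"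

definition lexless :: "'v::linorder list \<Rightarrow> 'v list \<Rightarrow> bool" where
  "lexless \<alpha> \<beta> \<longleftrightarrow> (\<exists>\<delta>. \<delta> \<noteq> [] \<and> \<beta> = \<delta> @ \<alpha>) \<or>
     (\<exists>\<alpha>' \<beta>' A B \<gamma>. \<alpha> = \<alpha>' @ A # \<gamma> \<and> \<beta> = \<beta>' @ B # \<gamma> \<and> A < B)"

definition out_cands :: "('v, 'a) bpa_rules \<Rightarrow> 'v list \<Rightarrow> 'v \<Rightarrow> 'v list set" where
  "out_cands R \<gamma> A = {\<alpha>. bbisim R (\<alpha> @ \<gamma>) (A # \<gamma>) \<and> redfree R \<gamma> \<alpha>}"

definition longest_cands :: "('v, 'a) bpa_rules \<Rightarrow> 'v list \<Rightarrow> 'v \<Rightarrow> 'v list set" where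
  "longest_cands R \<gamma> A = {\<alpha> \<in> out_cands R \<gamma> A. \<forall>\<beta> \<in> out_cands R \<gamma> A. length \<beta> \<le> length \<alpha>}"

definition canon_out :: "('v::linorder, 'a) bpa_rules \<Rightarrow> 'v list \<Rightarrow> 'v \<Rightarrow> 'v list" where
  "canon_out R \<gamma> A = (THE \<alpha>. \<alpha> \<in> longest_cands R \<gamma> A \<and>
      (\<forall>\<beta> \<in> longest_cands R \<gamma> A. \<beta> \<noteq> \<alpha> \<longrightarrow> lexless \<alpha> \<beta>))"

(* transition function of the canonical transducer on states q = R_gamma,
   computed via a representative gamma of q *)
definition canon_delta :: "('v::linorder, 'a) bpa_rules \<Rightarrow> 'v set \<Rightarrow> 'v \<Rightarrow> 'v set \<times> 'v list" where
  "canon_delta R q A = (let \<gamma> = (SOME \<gamma>. Rset R \<gamma> = q) in (Rset R (A # \<gamma>), canon_out R \<gamma> A))"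

(* run of the transducer reading right to left: returns (final state, output) *)
fun trans_run :: "('v::linorder, 'a) bpa_rules \<Rightarrow> 'v set \<Rightarrow> 'v list \<Rightarrow> 'v set \<times> 'v list" where
  "trans_run R q [] = (q, [])"
| "trans_run R q (A # w) = (let (q1, o1) = trans_run R q w; (q2, o2) = canon_delta R q1 A in (q2, o2 @ o1))"

definition canon_T :: "('v::linorder, 'a) bpa_rules \<Rightarrow> 'v list \<Rightarrow> 'v list" where
  "canon_T R w = snd (trans_run R (Rset R []) w)"

end

theory Submission
  imports Defs
begin


context
  fixes R :: "('v, 'a) bpa_rules"
begin

definition BB where "BB = {(s,t). bbisim R s t}"

lemma step_Nil[simp]: "\<not> bpa_step R [] a t"
  by (simp add: bpa_step_def)

lemma step_Cons: "bpa_step R (A # \<beta>) a t \<longleftrightarrow> (\<exists>\<alpha>. (A, a, \<alpha>) \<in> R \<and> t = \<alpha> @ \<beta>)"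
  by (auto simp add: bpa_step_def)

lemma step_append: "bpa_step R s a t \<Longrightarrow> bpa_step R (s @ \<beta>) a (t @ \<beta>)"
  by (auto simp add: bpa_step_def)

lemma tau_path_mono: "tau_path R B s t u \<Longrightarrow> B \<subseteq> B' \<Longrightarrow> tau_path R B' s t u"
  by (induction rule: tau_path.induct) (auto intro: tau_path.intros)

lemma tau_path_inB: "tau_path R B s t u \<Longrightarrow> (s,t) \<in> B \<Longrightarrow> (s,u) \<in> B"
  by (induction rule: tau_path.induct) auto

lemma tau_path_trans: "tau_path R B s b c \<Longrightarrow> tau_path R B s a b \<Longrightarrow> tau_path R B s a c"
  by (induction rule: tau_path.induct) (auto intro: tau_path.intros)

lemma BB_bisim: "branching_bisim R BB"
proof -
  have h1: "bb_half R BB"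
    unfolding bb_half_def
  proof (intro allI impI)
    fix s t a s' assume st: "(s,t) \<in> BB" and mv: "bpa_step R s a s'"
    then obtain B where B: "branching_bisim R B" "(s,t) \<in> B" by (auto simp: BB_def bbisim_def)
    have sub: "B \<subseteq> BB" using B(1) by (auto simp: BB_def bbisim_def)
    from B mv have "(a = None \<and> (s', t) \<in> B) \<or> (\<exists>tk t'. tau_path R B s t tk \<and> bpa_step R tk a t' \<and> (s', t') \<in> B)"
      unfolding branching_bisim_def bb_half_def by blast
    then show "(a = None \<and> (s', t) \<in> BB) \<or> (\<exists>tk t'. tau_path R BB s t tk \<and> bpa_step R tk a t' \<and> (s', t') \<in> BB)"
      using sub tau_path_mono by blast
  qed
  have h2: "bb_half R (BB\<inverse>)"
    unfolding bb_half_def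
  proof (intro allI impI)
    fix s t a s' assume st: "(s,t) \<in> BB\<inverse>" and mv: "bpa_step R s a s'"
    then obtain B where B: "branching_bisim R B" "(s,t) \<in> B\<inverse>" by (auto simp: BB_def bbisim_def)
    have sub: "B\<inverse> \<subseteq> BB\<inverse>" using B(1) by (auto simp: BB_def bbisim_def)
    from B mv have "(a = None \<and> (s', t) \<in> B\<inverse>) \<or> (\<exists>tk t'. tau_path R (B\<inverse>) s t tk \<and> bpa_step R tk a t' \<and> (s', t') \<in> B\<inverse>)"
      unfolding branching_bisim_def bb_half_def by blast
    then show "(a = None \<and> (s', t) \<in> BB\<inverse>) \<or> (\<exists>tk t'. tau_path R (BB\<inverse>) s t tk \<and> bpa_step R tk a t' \<and> (s', t') \<in> BB\<inverse>)"
      using sub tau_path_mono by blast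
  qed
  show ?thesis using h1 h2 by (simp add: branching_bisim_def)
qed

lemma bb_sym: "bbisim R s t \<Longrightarrow> bbisim R t s"
  unfolding bbisim_def branching_bisim_def by (metis converse_converse converse_iff)

lemma BB_sym: "BB\<inverse> = BB"
  by (auto simp: BB_def intro: bb_sym)

lemma bb_refl: "bbisim R s s"
proof -
  have "bb_half R Id" unfolding bb_half_def by (auto intro: tau_path.intros)
  then show ?thesis unfolding bbisim_def branching_bisim_def by auto
qed

lemma match_BB:
  assumes "bbisim R s t" "bpa_step R s a s'"
  shows "(a = None \<and> bbisim R s' t) \<or> (\<exists>tk t'. tau_path R BB s t tk \<and> bpa_step R tk a t' \<and> bbisim R s' t')"
  using BB_bisim assms unfolding branching_bisim_def bb_half_def BB_def by blast

lemma tau_path_comp_lift: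
  "tau_path R B2 x a b \<Longrightarrow> (s,x) \<in> B1 \<Longrightarrow> tau_path R (B1 O B2) s a b"
  by (induction rule: tau_path.induct) (auto intro: tau_path.intros)

lemma comp_K:
  assumes h2: "bb_half R B2"
  shows "tau_path R B1 s t tk \<Longrightarrow> (s,t) \<in> B1 \<Longrightarrow> (t,u) \<in> B2 \<Longrightarrow>
    \<exists>uk. tau_path R (B1 O B2) s u uk \<and> (tk, uk) \<in> B2"
proof (induction rule: tau_path.induct)
  case (tp_refl t)
  then show ?case by (auto intro: tau_path.intros)
next
  case (tp_step t x x')
  then obtain uk where uk: "tau_path R (B1 O B2) s u uk" "(x, uk) \<in> B2" by blast
  have sx: "(s,x) \<in> B1" using tau_path_inB tp_step by metis
  from h2 uk(2) tp_step(2) have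
    "((x', uk) \<in> B2) \<or> (\<exists>v v'. tau_path R B2 x uk v \<and> bpa_step R v None v' \<and> (x', v') \<in> B2)"
    unfolding bb_half_def by blast
  then show ?case
  proof
    assume "(x', uk) \<in> B2" then show ?thesis using uk by blast
  next
    assume "\<exists>v v'. tau_path R B2 x uk v \<and> bpa_step R v None v' \<and> (x', v') \<in> B2"
    then obtain v v' where v: "tau_path R B2 x uk v" "bpa_step R v None v'" "(x', v') \<in> B2" by blast
    have "tau_path R (B1 O B2) s uk v" using tau_path_comp_lift v(1) sx by blast
    then have "tau_path R (B1 O B2) s u v" using tau_path_trans uk(1) by blast
    moreover have "(s, v') \<in> B1 O B2" using tp_step(3) v(3) by blast
    ultimately have "tau_path R (B1 O B2) s u v'" using v(2) tau_path.tp_step by metis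
    then show ?thesis using v(3) by blast
  qed
qed

lemma comp_half:
  assumes h1: "bb_half R B1" and h2: "bb_half R B2"
  shows "bb_half R (B1 O B2)"
  unfolding bb_half_def
proof (intro allI impI)
  fix s u a s' assume su: "(s,u) \<in> B1 O B2" and mv: "bpa_step R s a s'"
  then obtain t where st: "(s,t) \<in> B1" and tu: "(t,u) \<in> B2" by blast
  from h1 st mv have "(a = None \<and> (s', t) \<in> B1) \<or> (\<exists>tk t'. tau_path R B1 s t tk \<and> bpa_step R tk a t' \<and> (s', t') \<in> B1)"
    unfolding bb_half_def by blast
  then show "(a = None \<and> (s', u) \<in> B1 O B2) \<or> (\<exists>tk t'. tau_path R (B1 O B2) s u tk \<and> bpa_step R tk a t' \<and> (s', t') \<in> B1 O B2)"
  proof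
    assume "a = None \<and> (s', t) \<in> B1" then show ?thesis using tu by blast
  next
    assume "\<exists>tk t'. tau_path R B1 s t tk \<and> bpa_step R tk a t' \<and> (s', t') \<in> B1"
    then obtain tk t' where tk: "tau_path R B1 s t tk" "bpa_step R tk a t'" "(s', t') \<in> B1" by blast
    obtain uk where uk: "tau_path R (B1 O B2) s u uk" "(tk, uk) \<in> B2" using comp_K[OF h2 tk(1) st tu] by blast
    have stk: "(s,tk) \<in> B1" using tau_path_inB tk(1) st by metis
    from h2 uk(2) tk(2) have
      "(a = None \<and> (t', uk) \<in> B2) \<or> (\<exists>v u'. tau_path R B2 tk uk v \<and> bpa_step R v a u' \<and> (t', u') \<in> B2)"
      unfolding bb_half_def by blast
    then show ?thesis
    proof
      assume A: "a = None \<and> (t', uk) \<in> B2"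
      then have s'uk: "(s', uk) \<in> B1 O B2" using tk(3) by blast
      from uk(1) show ?thesis
      proof (cases rule: tau_path.cases)
        case tp_refl then show ?thesis using A s'uk by blast
      next
        case (tp_step v)
        then show ?thesis using A s'uk by blast
      qed
    next
      assume "\<exists>v u'. tau_path R B2 tk uk v \<and> bpa_step R v a u' \<and> (t', u') \<in> B2"
      then obtain v u' where v: "tau_path R B2 tk uk v" "bpa_step R v a u'" "(t', u') \<in> B2" by blast
      have "tau_path R (B1 O B2) s uk v" using tau_path_comp_lift v(1) stk by blast
      then have "tau_path R (B1 O B2) s u v" using tau_path_trans uk(1) by blast
      then show ?thesis using v tk(3) by blast
    qed
  qed
qed

lemma bb_trans: "bbisim R s t \<Longrightarrow> bbisim R t u \<Longrightarrow> bbisim R s u"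
proof -
  assume "bbisim R s t" "bbisim R t u"
  then obtain B1 B2 where B: "branching_bisim R B1" "(s,t) \<in> B1" "branching_bisim R B2" "(t,u) \<in> B2"
    by (auto simp: bbisim_def)
  have "bb_half R (B1 O B2)" using B comp_half by (auto simp: branching_bisim_def)
  moreover have "bb_half R ((B1 O B2)\<inverse>)" using B comp_half
    by (auto simp: branching_bisim_def converse_relcomp)
  ultimately show ?thesis using B unfolding bbisim_def branching_bisim_def by blast
qed

end


context
  fixes R :: "('v, 'a) bpa_rules"
begin

lemma bb_left_half:
  "bb_half R {(x,y). \<exists>\<delta> s t. x = \<delta> @ s \<and> y = \<delta> @ t \<and> bbisim R s t}" (is "bb_half R ?L")
  unfolding bb_half_def
proof (intro allI impI)
  fix x y a x' assume xy: "(x,y) \<in> ?L" and mv: "bpa_step R x a x'"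
  then obtain \<delta> s t where d: "x = \<delta> @ s" "y = \<delta> @ t" "bbisim R s t" by blast
  have Lin: "bbisim R u v \<Longrightarrow> (u,v) \<in> ?L" for u v
    by (simp only: mem_Collect_eq case_prod_conv) (metis append_Nil)
  have sub: "BB R \<subseteq> ?L" using Lin by (auto simp: BB_def)
  show "(a = None \<and> (x', y) \<in> ?L) \<or> (\<exists>tk t'. tau_path R ?L x y tk \<and> bpa_step R tk a t' \<and> (x', t') \<in> ?L)"
  proof (cases \<delta>)
    case Nil
    then have "(a = None \<and> bbisim R x' y) \<or> (\<exists>tk t'. tau_path R (BB R) x y tk \<and> bpa_step R tk a t' \<and> bbisim R x' t')"
      using match_BB d mv by simp
    then show ?thesis
    proof
      assume "a = None \<and> bbisim R x' y" then show ?thesis using Lin by blast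
    next
      assume "\<exists>tk t'. tau_path R (BB R) x y tk \<and> bpa_step R tk a t' \<and> bbisim R x' t'"
      then obtain tk t' where "tau_path R (BB R) x y tk" "bpa_step R tk a t'" "bbisim R x' t'" by blast
      then show ?thesis using tau_path_mono[OF _ sub] Lin by blast
    qed
  next
    case (Cons A \<delta>')
    with mv d obtain \<alpha> where al: "(A,a,\<alpha>) \<in> R" "x' = \<alpha> @ \<delta>' @ s" by (auto simp: step_Cons)
    have "bpa_step R y a (\<alpha> @ \<delta>' @ t)" using al d Cons by (auto simp: step_Cons)
    moreover have "(x', \<alpha> @ \<delta>' @ t) \<in> ?L" using al d by (metis (mono_tags, lifting) append_assoc case_prodI mem_Collect_eq)
    ultimately show ?thesis by (blast intro: tau_path.tp_refl)
  qed
qed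

lemma bb_left: "bbisim R s t \<Longrightarrow> bbisim R (\<delta> @ s) (\<delta> @ t)"
proof -
  assume st: "bbisim R s t"
  let ?L = "{(x,y). \<exists>\<delta> s t. x = \<delta> @ s \<and> y = \<delta> @ t \<and> bbisim R s t}"
  have "?L\<inverse> = ?L" by (auto intro: bb_sym)
  then have "branching_bisim R ?L" using bb_left_half by (simp add: branching_bisim_def)
  moreover have "(\<delta> @ s, \<delta> @ t) \<in> ?L" using st by blast
  ultimately show ?thesis unfolding bbisim_def by blast
qed

lemma tau_path_Nil: "tau_path R B s t u \<Longrightarrow> t = [] \<Longrightarrow> u = []"
  by (induction rule: tau_path.induct) auto

lemma bb_Nil_step:
  assumes "bbisim R s []" "bpa_step R s a s'"
  shows "a = None \<and> bbisim R s' []"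
  using match_BB[OF assms] tau_path_Nil by fastforce

end


context
  fixes R :: "('v, 'a) bpa_rules"
begin

definition cst :: "'v list \<Rightarrow> 'a option \<Rightarrow> 'v list \<Rightarrow> nat" where
  "cst s a s' = (if a = None \<and> bbisim R s s' then 0 else 1)"

inductive cpath :: "'v list \<Rightarrow> nat \<Rightarrow> 'v list \<Rightarrow> bool" where
  cp_refl: "cpath s 0 s"
| cp_step: "bpa_step R s a s' \<Longrightarrow> cpath s' c t \<Longrightarrow> cpath s (cst s a s' + c) t"

lemma cpath0: "cpath s c t \<Longrightarrow> c = 0 \<Longrightarrow> bbisim R s t"
proof (induction rule: cpath.induct)
  case (cp_refl s) then show ?case by (simp add: bb_refl)
next
  case (cp_step s a s' c t)
  then have "bbisim R s s'" by (auto simp: cst_def split: if_splits)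
  then show ?case using cp_step bb_trans by auto
qed

lemma cpath_trans: "cpath s c1 t \<Longrightarrow> cpath t c2 u \<Longrightarrow> cpath s (c1 + c2) u"
  by (induction rule: cpath.induct) (auto simp: add.assoc intro: cpath.intros)

lemma cpath_reach_Nil: "(\<lambda>x y. \<exists>a. bpa_step R x a y)\<^sup>*\<^sup>* s [] \<Longrightarrow> \<exists>c. cpath s c []"
proof (induction rule: converse_rtranclp_induct)
  case base then show ?case by (auto intro: cp_refl)
next
  case (step y z) then show ?case by (auto intro: cp_step)
qed

lemma reach_append: "(\<lambda>x y. \<exists>a. bpa_step R x a y)\<^sup>*\<^sup>* s t \<Longrightarrow> (\<lambda>x y. \<exists>a. bpa_step R x a y)\<^sup>*\<^sup>* (s @ b) (t @ b)"
proof (induction rule: rtranclp_induct)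
  case base then show ?case by simp
next
  case (step y z)
  then obtain a where "bpa_step R y a z" by blast
  then have "bpa_step R (y @ b) a (z @ b)" by (rule step_append)
  then have "(\<lambda>x y. \<exists>a. bpa_step R x a y) (y @ b) (z @ b)" by blast
  with step.IH show ?case by (rule rtranclp.rtrancl_into_rtrancl)
qed

lemma normed_reach: "normed R \<Longrightarrow> (\<lambda>x y. \<exists>a. bpa_step R x a y)\<^sup>*\<^sup>* s []"
proof (induction s)
  case Nil then show ?case by simp
next
  case (Cons A s)
  have "(\<lambda>x y. \<exists>a. bpa_step R x a y)\<^sup>*\<^sup>* ([A] @ s) ([] @ s)"
    using Cons(2) unfolding normed_def by (blast intro: reach_append)
  then show ?case using Cons by (simp add: rtranclp_trans)
qed

lemma cpath_ex: "normed R \<Longrightarrow> \<exists>c. cpath s c []"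
  using normed_reach cpath_reach_Nil by blast

lemma cpath_Nil_sim0:
  "(\<lambda>x y. \<exists>a. bpa_step R x a y)\<^sup>*\<^sup>* s [] \<Longrightarrow> bbisim R s [] \<Longrightarrow> cpath s 0 []"
proof (induction rule: converse_rtranclp_induct)
  case base then show ?case by (auto intro: cp_refl)
next
  case (step y z)
  then obtain a where a: "bpa_step R y a z" by blast
  with step bb_Nil_step have "a = None" "bbisim R z []" by blast+
  moreover have "bbisim R y z" using calculation step bb_trans bb_sym by blast
  ultimately show ?case using step a cp_step[of y a z 0 "[]"] by (simp add: cst_def)
qed

lemma tau_path_cpath:
  "tau_path R (BB R) t s u \<Longrightarrow> bbisim R t s \<Longrightarrow> cpath u c x \<Longrightarrow> cpath s c x"
proof (induction arbitrary: c rule: tau_path.induct)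
  case (tp_refl s) then show ?case by simp
next
  case (tp_step s u u')
  have "(t,u) \<in> BB R" using tau_path_inB tp_step by (metis BB_def case_prodI mem_Collect_eq)
  then have "bbisim R u u'" using tp_step by (auto simp: BB_def intro: bb_trans bb_sym)
  then have "cpath u (cst u None u' + c) x" using tp_step by (blast intro: cp_step)
  then show ?case using tp_step \<open>bbisim R u u'\<close> by (simp add: cst_def)
qed

lemma norm_sim_le:
  assumes nR: "normed R"
  shows "cpath t c [] \<Longrightarrow> bbisim R s t \<Longrightarrow> \<exists>c'\<le>c. cpath s c' []"
proof (induction t c "[]::'v list" arbitrary: s rule: cpath.induct)
  case cp_refl
  then show ?case using cpath_Nil_sim0 normed_reach[OF nR] by blast
next
  case (cp_step t a t1 c1)
  have ts: "bbisim R t s" using cp_step bb_sym by blast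
  from match_BB[OF ts cp_step(1)] show ?case
  proof
    assume "a = None \<and> bbisim R t1 s"
    then obtain c' where "c' \<le> c1" "cpath s c' []" using cp_step bb_sym by blast
    then show ?thesis by (intro exI[where x=c']) auto
  next
    assume "\<exists>tk t'. tau_path R (BB R) t s tk \<and> bpa_step R tk a t' \<and> bbisim R t1 t'"
    then obtain sk s' where k: "tau_path R (BB R) t s sk" "bpa_step R sk a s'" "bbisim R t1 s'" by blast
    obtain c' where c': "c' \<le> c1" "cpath s' c' []" using cp_step k bb_sym by blast
    have tsk: "bbisim R t sk" using tau_path_inB[OF k(1)] ts by (auto simp: BB_def)
    have "cst sk a s' = cst t a t1"
      unfolding cst_def using tsk k(3) by (metis bb_sym bb_trans)
    then have "cpath sk (cst t a t1 + c') []" using k(2) c'(2) cpath.cp_step[of sk a s'] by metis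
    then have "cpath s (cst t a t1 + c') []" using tau_path_cpath k(1) ts by blast
    then show ?thesis using c' by (intro exI[where x="cst t a t1 + c'"]) auto
  qed
qed

definition nrm :: "'v list \<Rightarrow> nat" where "nrm s = (LEAST c. cpath s c [])"

lemma nrm_path: "normed R \<Longrightarrow> cpath s (nrm s) []"
  unfolding nrm_def using cpath_ex by (metis LeastI)

lemma nrm_le: "cpath s c [] \<Longrightarrow> nrm s \<le> c"
  unfolding nrm_def by (rule Least_le)

lemma nrm_sim: "normed R \<Longrightarrow> bbisim R s t \<Longrightarrow> nrm s = nrm t"
proof -
  assume nR: "normed R" and st: "bbisim R s t"
  have "nrm s \<le> nrm t" using norm_sim_le[OF nR nrm_path[OF nR] st] nrm_le by (meson le_trans)
  moreover have "nrm t \<le> nrm s" using norm_sim_le[OF nR nrm_path[OF nR] bb_sym[OF st]] nrm_le by (meson le_trans)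
  ultimately show ?thesis by simp
qed

lemma cpath_split:
  "cpath x c [] \<Longrightarrow> x = \<delta> @ \<gamma> \<Longrightarrow> \<exists>c1 c2. c = c1 + c2 \<and> cpath (\<delta> @ \<gamma>) c1 \<gamma> \<and> cpath \<gamma> c2 []"
proof (induction x c "[]::'v list" arbitrary: \<delta> rule: cpath.induct)
  case cp_refl then show ?case by (auto intro: cpath.intros)
next
  case (cp_step x a x' c)
  show ?case
  proof (cases \<delta>)
    case Nil
    have "cpath x (cst x a x' + c) []" using \<open>bpa_step R x a x'\<close> \<open>cpath x' c []\<close> by (rule cpath.cp_step)
    then show ?thesis using Nil cp_step(4) by (intro exI[where x=0] exI[where x="cst x a x' + c"]) (auto intro: cpath.cp_refl)
  next
    case (Cons A \<delta>')
    then obtain \<alpha> where "x' = (\<alpha> @ \<delta>') @ \<gamma>" using cp_step by (auto simp: step_Cons)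
    then obtain c1 c2 where "c = c1 + c2" "cpath x' c1 \<gamma>" "cpath \<gamma> c2 []" using cp_step by metis
    then show ?thesis using cp_step cpath.cp_step[of x a x' c1 \<gamma>]
      by (intro exI[where x="cst x a x' + c1"] exI[where x=c2]) auto
  qed
qed

lemma nrm_append_ge: "normed R \<Longrightarrow> nrm \<gamma> \<le> nrm (\<delta> @ \<gamma>)"
  using cpath_split[OF nrm_path refl] nrm_le by (metis le_add2 le_trans)

lemma nrm_eq_sim: "normed R \<Longrightarrow> nrm (\<delta> @ \<gamma>) = nrm \<gamma> \<Longrightarrow> bbisim R (\<delta> @ \<gamma>) \<gamma>"
proof -
  assume nR: "normed R" and eq: "nrm (\<delta> @ \<gamma>) = nrm \<gamma>"
  obtain c1 c2 where c: "nrm (\<delta> @ \<gamma>) = c1 + c2" "cpath (\<delta> @ \<gamma>) c1 \<gamma>" "cpath \<gamma> c2 []"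
    using cpath_split[OF nrm_path[OF nR] refl] by blast
  have "nrm \<gamma> \<le> c2" using c nrm_le by blast
  then have "c1 = 0" using c eq by simp
  then show ?thesis using cpath0 c by blast
qed

end


context
  fixes R :: "('v, 'a) bpa_rules"
  assumes nR: "normed R"
begin

lemma red_tail: "bbisim R (X # \<eta> @ \<gamma>) \<gamma> \<Longrightarrow> bbisim R (\<eta> @ \<gamma>) \<gamma>"
proof -
  assume h: "bbisim R (X # \<eta> @ \<gamma>) \<gamma>"
  have "nrm R (X # \<eta> @ \<gamma>) = nrm R \<gamma>" using nrm_sim[OF nR h] .
  moreover have "nrm R (\<eta> @ \<gamma>) \<le> nrm R ([X] @ \<eta> @ \<gamma>)" using nrm_append_ge[OF nR] .
  moreover have "nrm R \<gamma> \<le> nrm R (\<eta> @ \<gamma>)" using nrm_append_ge[OF nR] .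
  ultimately have "nrm R (\<eta> @ \<gamma>) = nrm R \<gamma>" by simp
  then show ?thesis using nrm_eq_sim[OF nR] by blast
qed

lemma absorb_transfer:
  assumes RR: "Rset R \<gamma>1 = Rset R \<gamma>2"
  shows "bbisim R (\<beta> @ \<gamma>1) \<gamma>1 \<Longrightarrow> bbisim R (\<beta> @ \<gamma>2) \<gamma>2"
proof (induction \<beta>)
  case Nil then show ?case by (simp add: bb_refl)
next
  case (Cons X \<eta>)
  have e1: "bbisim R (\<eta> @ \<gamma>1) \<gamma>1" using red_tail Cons.prems by simp
  then have e2: "bbisim R (\<eta> @ \<gamma>2) \<gamma>2" using Cons.IH by blast
  have "bbisim R ([X] @ \<eta> @ \<gamma>1) ([X] @ \<gamma>1)" using bb_left e1 by blast
  then have "bbisim R (X # \<gamma>1) \<gamma>1" using Cons.prems by (metis append_Cons append_Nil bb_sym bb_trans)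
  then have "X \<in> Rset R \<gamma>1" by (simp add: Rset_def)
  then have "X \<in> Rset R \<gamma>2" using RR by simp
  then have x2: "bbisim R (X # \<gamma>2) \<gamma>2" by (simp add: Rset_def)
  have "bbisim R ([X] @ \<eta> @ \<gamma>2) ([X] @ \<gamma>2)" using bb_left e2 by blast
  then show ?case using x2 by (metis append_Cons append_Nil bb_trans)
qed

definition TB :: "'v list \<Rightarrow> 'v list \<Rightarrow> ('v list \<times> 'v list) set" where
  "TB \<gamma>1 \<gamma>2 = {(x,y). \<exists>\<alpha> \<beta>. x = \<alpha> @ \<gamma>2 \<and> y = \<beta> @ \<gamma>2 \<and> bbisim R (\<alpha> @ \<gamma>1) (\<beta> @ \<gamma>1)} \<union> BB R"

lemma TB_sym: "(TB \<gamma>1 \<gamma>2)\<inverse> = TB \<gamma>1 \<gamma>2"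
  unfolding TB_def BB_def by (auto intro: bb_sym)

lemma TP:
  assumes "tau_path R (BB R) (\<alpha> @ \<gamma>1) t tk" "t = \<beta> @ \<gamma>1" "\<beta> \<noteq> []" "\<not> bbisim R (\<alpha> @ \<gamma>1) \<gamma>1"
  shows "\<exists>\<delta>. tk = \<delta> @ \<gamma>1 \<and> \<delta> \<noteq> [] \<and> tau_path R (TB \<gamma>1 \<gamma>2) (\<alpha> @ \<gamma>2) (\<beta> @ \<gamma>2) (\<delta> @ \<gamma>2)"
  using assms
proof (induction rule: tau_path.induct)
  case (tp_refl t)
  then show ?case by (auto intro: tau_path.tp_refl)
next
  case (tp_step t u u')
  then obtain \<delta> where d: "u = \<delta> @ \<gamma>1" "\<delta> \<noteq> []" "tau_path R (TB \<gamma>1 \<gamma>2) (\<alpha> @ \<gamma>2) (\<beta> @ \<gamma>2) (\<delta> @ \<gamma>2)" by blast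
  then obtain A \<delta>' where Ad: "\<delta> = A # \<delta>'" by (cases \<delta>) auto
  then obtain \<rho> where r: "(A, None, \<rho>) \<in> R" "u' = (\<rho> @ \<delta>') @ \<gamma>1" using tp_step d by (auto simp: step_Cons)
  have ne: "\<rho> @ \<delta>' \<noteq> []"
  proof
    assume "\<rho> @ \<delta>' = []" then have "u' = \<gamma>1" using r by simp
    then show False using tp_step by (auto simp: BB_def)
  qed
  have st: "bpa_step R (\<delta> @ \<gamma>2) None ((\<rho> @ \<delta>') @ \<gamma>2)" using r Ad by (auto simp: step_Cons)
  have "(\<alpha> @ \<gamma>2, (\<rho> @ \<delta>') @ \<gamma>2) \<in> TB \<gamma>1 \<gamma>2" using tp_step r unfolding TB_def BB_def by blast
  then have "tau_path R (TB \<gamma>1 \<gamma>2) (\<alpha> @ \<gamma>2) (\<beta> @ \<gamma>2) ((\<rho> @ \<delta>') @ \<gamma>2)"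
    using d(3) st tau_path.tp_step by metis
  then show ?case using r ne by blast
qed

lemma TB_half:
  assumes RR: "Rset R \<gamma>1 = Rset R \<gamma>2"
  shows "bb_half R (TB \<gamma>1 \<gamma>2)"
  unfolding bb_half_def
proof (intro allI impI)
  fix x y a x' assume xy: "(x,y) \<in> TB \<gamma>1 \<gamma>2" and mv: "bpa_step R x a x'"
  have sub: "BB R \<subseteq> TB \<gamma>1 \<gamma>2" by (auto simp: TB_def)
  let ?G = "(a = None \<and> (x', y) \<in> TB \<gamma>1 \<gamma>2) \<or> (\<exists>tk t'. tau_path R (TB \<gamma>1 \<gamma>2) x y tk \<and> bpa_step R tk a t' \<and> (x', t') \<in> TB \<gamma>1 \<gamma>2)"
  have BBcase: ?G if "bbisim R x y"
  proof -
    from match_BB[OF that mv] show ?G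
    proof
      assume "a = None \<and> bbisim R x' y" then show ?G using sub by (auto simp: BB_def)
    next
      assume "\<exists>tk t'. tau_path R (BB R) x y tk \<and> bpa_step R tk a t' \<and> bbisim R x' t'"
      then obtain tk t' where "tau_path R (BB R) x y tk" "bpa_step R tk a t'" "bbisim R x' t'" by blast
      moreover have "(x', t') \<in> TB \<gamma>1 \<gamma>2" using calculation sub by (auto simp: BB_def)
      ultimately show ?G using tau_path_mono[OF _ sub] by blast
    qed
  qed
  show ?G
  proof (cases "bbisim R x y")
    case True then show ?thesis by (rule BBcase)
  next
    case False
    with xy obtain \<alpha> \<beta> where ab: "x = \<alpha> @ \<gamma>2" "y = \<beta> @ \<gamma>2" "bbisim R (\<alpha> @ \<gamma>1) (\<beta> @ \<gamma>1)"
      unfolding TB_def BB_def by blast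
    have na: "\<not> bbisim R (\<alpha> @ \<gamma>1) \<gamma>1"
    proof
      assume h: "bbisim R (\<alpha> @ \<gamma>1) \<gamma>1"
      then have "bbisim R (\<beta> @ \<gamma>1) \<gamma>1" using ab(3) bb_sym bb_trans by blast
      then have "bbisim R (\<beta> @ \<gamma>2) \<gamma>2" using absorb_transfer[OF RR] by blast
      moreover have "bbisim R (\<alpha> @ \<gamma>2) \<gamma>2" using absorb_transfer[OF RR] h by blast
      ultimately show False using False ab bb_sym bb_trans by metis
    qed
    then have "\<alpha> \<noteq> []" by (auto simp: bb_refl)
    then obtain A \<alpha>'' where Aa: "\<alpha> = A # \<alpha>''" by (cases \<alpha>) auto
    have nb: "\<beta> \<noteq> []" using na ab(3) by auto
    obtain \<rho> where r: "(A, a, \<rho>) \<in> R" "x' = (\<rho> @ \<alpha>'') @ \<gamma>2" using mv ab Aa by (auto simp: step_Cons)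
    have mv1: "bpa_step R (\<alpha> @ \<gamma>1) a ((\<rho> @ \<alpha>'') @ \<gamma>1)" using r Aa by (auto simp: step_Cons)
    from match_BB[OF ab(3) mv1] show ?thesis
    proof
      assume "a = None \<and> bbisim R ((\<rho> @ \<alpha>'') @ \<gamma>1) (\<beta> @ \<gamma>1)"
      then show ?thesis using r ab unfolding TB_def by blast
    next
      assume "\<exists>tk t'. tau_path R (BB R) (\<alpha> @ \<gamma>1) (\<beta> @ \<gamma>1) tk \<and> bpa_step R tk a t' \<and> bbisim R ((\<rho> @ \<alpha>'') @ \<gamma>1) t'"
      then obtain tk t' where k: "tau_path R (BB R) (\<alpha> @ \<gamma>1) (\<beta> @ \<gamma>1) tk" "bpa_step R tk a t'"
        "bbisim R ((\<rho> @ \<alpha>'') @ \<gamma>1) t'" by blast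
      obtain \<delta> where d: "tk = \<delta> @ \<gamma>1" "\<delta> \<noteq> []" "tau_path R (TB \<gamma>1 \<gamma>2) (\<alpha> @ \<gamma>2) (\<beta> @ \<gamma>2) (\<delta> @ \<gamma>2)"
        using TP[OF k(1) refl nb na] by blast
      then obtain B0 \<delta>0 where Bd: "\<delta> = B0 # \<delta>0" by (cases \<delta>) auto
      then obtain \<sigma> where s: "(B0, a, \<sigma>) \<in> R" "t' = (\<sigma> @ \<delta>0) @ \<gamma>1" using k(2) d by (auto simp: step_Cons)
      have "bpa_step R (\<delta> @ \<gamma>2) a ((\<sigma> @ \<delta>0) @ \<gamma>2)" using s Bd by (auto simp: step_Cons)
      moreover have "(x', (\<sigma> @ \<delta>0) @ \<gamma>2) \<in> TB \<gamma>1 \<gamma>2" using r s k(3) unfolding TB_def by blast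
      ultimately show ?thesis using d ab by blast
    qed
  qed
qed

lemma lemmaT:
  assumes RR: "Rset R \<gamma>1 = Rset R \<gamma>2" and h: "bbisim R (\<alpha> @ \<gamma>1) (\<beta> @ \<gamma>1)"
  shows "bbisim R (\<alpha> @ \<gamma>2) (\<beta> @ \<gamma>2)"
proof -
  have "branching_bisim R (TB \<gamma>1 \<gamma>2)" using TB_half[OF RR] TB_sym by (simp add: branching_bisim_def)
  moreover have "(\<alpha> @ \<gamma>2, \<beta> @ \<gamma>2) \<in> TB \<gamma>1 \<gamma>2" using h unfolding TB_def by blast
  ultimately show ?thesis unfolding bbisim_def by blast
qed

lemma lemmaT_iff: "Rset R \<gamma>1 = Rset R \<gamma>2 \<Longrightarrow> bbisim R (\<alpha> @ \<gamma>1) (\<beta> @ \<gamma>1) \<longleftrightarrow> bbisim R (\<alpha> @ \<gamma>2) (\<beta> @ \<gamma>2)"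
  using lemmaT by metis

lemma Rset_sim: "bbisim R \<gamma>1 \<gamma>2 \<Longrightarrow> Rset R \<gamma>1 = Rset R \<gamma>2"
proof -
  assume h: "bbisim R \<gamma>1 \<gamma>2"
  have "bbisim R (X # \<gamma>1) \<gamma>1 \<longleftrightarrow> bbisim R (X # \<gamma>2) \<gamma>2" for X
  proof -
    have "bbisim R ([X] @ \<gamma>1) ([X] @ \<gamma>2)" using bb_left h by blast
    then show ?thesis using h by (metis append_Cons append_Nil bb_sym bb_trans)
  qed
  then show ?thesis by (auto simp: Rset_def)
qed

lemma Rset_Cons: "Rset R \<gamma>1 = Rset R \<gamma>2 \<Longrightarrow> Rset R (A # \<gamma>1) = Rset R (A # \<gamma>2)"
proof -
  assume RR: "Rset R \<gamma>1 = Rset R \<gamma>2"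
  have "bbisim R ([X, A] @ \<gamma>1) ([A] @ \<gamma>1) \<longleftrightarrow> bbisim R ([X, A] @ \<gamma>2) ([A] @ \<gamma>2)" for X
    using lemmaT_iff[OF RR] by blast
  then show ?thesis unfolding Rset_def by auto
qed

end


lemma redfree_Nil[simp]: "redfree R \<gamma> []"
  by (simp add: redfree_def)

lemma redfree_Cons: "redfree R \<gamma> (X # \<alpha>) \<longleftrightarrow> \<not> bbisim R (X # \<alpha> @ \<gamma>) (\<alpha> @ \<gamma>) \<and> redfree R \<gamma> \<alpha>"
  unfolding redfree_def
  by (auto simp: Cons_eq_append_conv)

lemma redfree_append: "redfree R \<gamma> (\<alpha> @ \<beta>) \<longleftrightarrow> redfree R (\<beta> @ \<gamma>) \<alpha> \<and> redfree R \<gamma> \<beta>"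
  by (induction \<alpha>) (auto simp: redfree_Cons)

lemma lexless_rev:
  fixes \<alpha> \<beta> :: "'v::linorder list"
  assumes "length \<alpha> = length \<beta>"
  shows "lexless \<alpha> \<beta> \<longleftrightarrow> ord_class.lexordp (rev \<alpha>) (rev \<beta>)"
proof
  assume "lexless \<alpha> \<beta>"
  then show "ord_class.lexordp (rev \<alpha>) (rev \<beta>)" unfolding lexless_def
  proof
    assume "\<exists>\<delta>. \<delta> \<noteq> [] \<and> \<beta> = \<delta> @ \<alpha>"
    then show ?thesis using assms by auto
  next
    assume "\<exists>\<alpha>' \<beta>' A B \<gamma>. \<alpha> = \<alpha>' @ A # \<gamma> \<and> \<beta> = \<beta>' @ B # \<gamma> \<and> A < B"
    then obtain \<alpha>' \<beta>' A B \<gamma> where "\<alpha> = \<alpha>' @ A # \<gamma>" "\<beta> = \<beta>' @ B # \<gamma>" "A < B" by blast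
    then show ?thesis by (simp add: lexordp_append_left_rightI)
  qed
next
  assume "ord_class.lexordp (rev \<alpha>) (rev \<beta>)"
  then have "(\<exists>x vs. rev \<beta> = rev \<alpha> @ x # vs) \<or> (\<exists>us a b vs ws. a < b \<and> rev \<alpha> = us @ a # vs \<and> rev \<beta> = us @ b # ws)"
    by (simp add: lexordp_iff)
  then show "lexless \<alpha> \<beta>"
  proof
    assume "\<exists>x vs. rev \<beta> = rev \<alpha> @ x # vs"
    then obtain x vs where "rev \<beta> = rev \<alpha> @ x # vs" by blast
    then have "length (rev \<beta>) > length (rev \<alpha>)" by simp
    then show ?thesis using assms by simp
  next
    assume "\<exists>us a b vs ws. a < b \<and> rev \<alpha> = us @ a # vs \<and> rev \<beta> = us @ b # ws"
    then obtain us a b vs ws where h: "a < b" "rev \<alpha> = us @ a # vs" "rev \<beta> = us @ b # ws" by blast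
    then have "\<alpha> = rev vs @ a # rev us" "\<beta> = rev ws @ b # rev us"
      by (metis rev_append rev_rev_ident rev.simps(2) append_assoc append_Cons append_Nil)+
    then show ?thesis unfolding lexless_def using h(1) by blast
  qed
qed

lemma lexordp_min_ex:
  fixes S :: "'v::linorder list set"
  shows "finite S \<Longrightarrow> S \<noteq> {} \<Longrightarrow> \<exists>m\<in>S. \<forall>x\<in>S. x \<noteq> m \<longrightarrow> ord_class.lexordp m x"
proof (induction rule: finite_ne_induct)
  case (singleton x) then show ?case by auto
next
  case (insert x F)
  then obtain m where m: "m \<in> F" "\<forall>y\<in>F. y \<noteq> m \<longrightarrow> ord_class.lexordp m y" by blast
  show ?case
  proof (cases "ord_class.lexordp x m")
    case True
    have "\<forall>y\<in>insert x F. y \<noteq> x \<longrightarrow> ord_class.lexordp x y"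
    proof (intro ballI impI)
      fix y assume "y \<in> insert x F" "y \<noteq> x"
      then have "y \<in> F" by simp
      show "ord_class.lexordp x y"
      proof (cases "y = m")
        case True then show ?thesis using \<open>ord_class.lexordp x m\<close> by simp
      next
        case False then have "ord_class.lexordp m y" using m \<open>y \<in> F\<close> by blast
        then show ?thesis using \<open>ord_class.lexordp x m\<close> lexordp_trans by blast
      qed
    qed
    then show ?thesis by blast
  next
    case False
    then have "x = m \<or> ord_class.lexordp m x" using lexordp_linear by blast
    then show ?thesis using m by blast
  qed
qed

context
  fixes R :: "('v::{finite,linorder}, 'a) bpa_rules"
  assumes nR: "normed R"
begin

lemma redfree_transfer: "Rset R \<gamma>1 = Rset R \<gamma>2 \<Longrightarrow> redfree R \<gamma>1 \<alpha> \<longleftrightarrow> redfree R \<gamma>2 \<alpha>"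
proof (induction \<alpha>)
  case Nil then show ?case by simp
next
  case (Cons X \<alpha>)
  have "bbisim R ((X # \<alpha>) @ \<gamma>1) (\<alpha> @ \<gamma>1) \<longleftrightarrow> bbisim R ((X # \<alpha>) @ \<gamma>2) (\<alpha> @ \<gamma>2)"
    using lemmaT_iff[OF nR Cons.prems] by blast
  then show ?case using Cons by (simp add: redfree_Cons)
qed

lemma out_cands_eq: "Rset R \<gamma>1 = Rset R \<gamma>2 \<Longrightarrow> out_cands R \<gamma>1 A = out_cands R \<gamma>2 A"
proof -
  assume RR: "Rset R \<gamma>1 = Rset R \<gamma>2"
  have "bbisim R (\<alpha> @ \<gamma>1) ([A] @ \<gamma>1) \<longleftrightarrow> bbisim R (\<alpha> @ \<gamma>2) ([A] @ \<gamma>2)" for \<alpha>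
    using lemmaT_iff[OF nR RR] by blast
  then show ?thesis unfolding out_cands_def using redfree_transfer[OF RR] by auto
qed

lemma canon_out_eq: "Rset R \<gamma>1 = Rset R \<gamma>2 \<Longrightarrow> canon_out R \<gamma>1 A = canon_out R \<gamma>2 A"
proof -
  assume "Rset R \<gamma>1 = Rset R \<gamma>2"
  then have "out_cands R \<gamma>1 A = out_cands R \<gamma>2 A" by (rule out_cands_eq)
  then show ?thesis unfolding canon_out_def longest_cands_def by simp
qed

lemma redfree_norm: "redfree R \<gamma> \<alpha> \<Longrightarrow> length \<alpha> + nrm R \<gamma> \<le> nrm R (\<alpha> @ \<gamma>)"
proof (induction \<alpha>)
  case Nil then show ?case by simp
next
  case (Cons X \<alpha>)
  then have n1: "\<not> bbisim R (X # \<alpha> @ \<gamma>) (\<alpha> @ \<gamma>)" "redfree R \<gamma> \<alpha>" by (auto simp: redfree_Cons)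
  have a1: "nrm R (\<alpha> @ \<gamma>) \<le> nrm R ([X] @ \<alpha> @ \<gamma>)" using nrm_append_ge[OF nR] .
  have a2: "nrm R ([X] @ \<alpha> @ \<gamma>) \<noteq> nrm R (\<alpha> @ \<gamma>)"
  proof
    assume "nrm R ([X] @ \<alpha> @ \<gamma>) = nrm R (\<alpha> @ \<gamma>)"
    then have "bbisim R ([X] @ \<alpha> @ \<gamma>) (\<alpha> @ \<gamma>)" by (rule nrm_eq_sim[OF nR])
    then show False using n1(1) by simp
  qed
  have a3: "length \<alpha> + nrm R \<gamma> \<le> nrm R (\<alpha> @ \<gamma>)" using Cons.IH n1(2) by blast
  have "length (X # \<alpha>) + nrm R \<gamma> \<le> nrm R ([X] @ \<alpha> @ \<gamma>)" using a1 a2 a3 by simp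
  then show ?case by simp
qed

lemma out_cands_bound: "\<alpha> \<in> out_cands R \<gamma> A \<Longrightarrow> length \<alpha> \<le> nrm R (A # \<gamma>)"
proof -
  assume "\<alpha> \<in> out_cands R \<gamma> A"
  then have h: "bbisim R (\<alpha> @ \<gamma>) (A # \<gamma>)" "redfree R \<gamma> \<alpha>" by (auto simp: out_cands_def)
  have "nrm R (\<alpha> @ \<gamma>) = nrm R (A # \<gamma>)" using nrm_sim[OF nR h(1)] .
  then show ?thesis using redfree_norm[OF h(2)] by simp
qed

lemma out_cands_ne: "\<exists>\<alpha>. \<alpha> \<in> out_cands R \<gamma> A"
proof (cases "bbisim R (A # \<gamma>) \<gamma>")
  case True
  then have "[] \<in> out_cands R \<gamma> A" by (auto simp: out_cands_def intro: bb_sym)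
  then show ?thesis by blast
next
  case False
  then have "[A] \<in> out_cands R \<gamma> A" by (auto simp: out_cands_def redfree_Cons bb_refl)
  then show ?thesis by blast
qed

lemma longest_ex: "\<exists>m. (\<exists>\<alpha>\<in>out_cands R \<gamma> A. length \<alpha> = m) \<and> (\<forall>\<beta>\<in>out_cands R \<gamma> A. length \<beta> \<le> m)"
proof -
  let ?L = "length ` out_cands R \<gamma> A"
  have fin: "finite ?L" using out_cands_bound by (meson finite_atMost finite_subset image_subsetI atMost_iff)
  have ne: "?L \<noteq> {}" using out_cands_ne by blast
  show ?thesis using Max_in[OF fin ne] Max_ge[OF fin] by (intro exI[where x="Max ?L"]) auto
qed

lemma canon_out_spec:
  "canon_out R \<gamma> A \<in> longest_cands R \<gamma> A \<and>
   (\<forall>\<beta>\<in>longest_cands R \<gamma> A. \<beta> \<noteq> canon_out R \<gamma> A \<longrightarrow> lexless (canon_out R \<gamma> A) \<beta>)"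
proof -
  obtain m where m: "\<exists>\<alpha>\<in>out_cands R \<gamma> A. length \<alpha> = m" "\<forall>\<beta>\<in>out_cands R \<gamma> A. length \<beta> \<le> m"
    using longest_ex by blast
  let ?L = "longest_cands R \<gamma> A"
  have Leq: "?L = {\<alpha> \<in> out_cands R \<gamma> A. length \<alpha> = m}"
    unfolding longest_cands_def using m by (auto intro: antisym)
  have fin: "finite ?L"
  proof -
    have "?L \<subseteq> {xs. set xs \<subseteq> UNIV \<and> length xs = m}" using Leq by auto
    moreover have "finite {xs::'v list. set xs \<subseteq> UNIV \<and> length xs = m}"
      by (rule finite_lists_length_eq) simp
    ultimately show ?thesis by (rule finite_subset)
  qed
  have ne: "?L \<noteq> {}" using Leq m by auto
  have len: "\<And>\<alpha>. \<alpha> \<in> ?L \<Longrightarrow> length \<alpha> = m" using Leq by auto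
  obtain r where r: "r \<in> rev ` ?L" "\<forall>x\<in>rev ` ?L. x \<noteq> r \<longrightarrow> ord_class.lexordp r x"
    using lexordp_min_ex[of "rev ` ?L"] fin ne by blast
  let ?P = "\<lambda>\<alpha>. \<alpha> \<in> ?L \<and> (\<forall>\<beta>\<in>?L. \<beta> \<noteq> \<alpha> \<longrightarrow> lexless \<alpha> \<beta>)"
  have Pr: "?P (rev r)"
  proof -
    have "rev r \<in> ?L" using r(1) by auto
    moreover have "\<forall>\<beta>\<in>?L. \<beta> \<noteq> rev r \<longrightarrow> lexless (rev r) \<beta>"
    proof (intro ballI impI)
      fix \<beta> assume b: "\<beta> \<in> ?L" "\<beta> \<noteq> rev r"
      then have "ord_class.lexordp r (rev \<beta>)" using r(2) by (metis image_eqI rev_rev_ident)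
      then show "lexless (rev r) \<beta>" using lexless_rev len b calculation by (metis rev_rev_ident)
    qed
    ultimately show ?thesis by blast
  qed
  have uniq: "\<And>\<alpha>. ?P \<alpha> \<Longrightarrow> \<alpha> = rev r"
  proof (rule ccontr)
    fix \<alpha> assume P: "?P \<alpha>" and ne: "\<alpha> \<noteq> rev r"
    then have "lexless \<alpha> (rev r)" "lexless (rev r) \<alpha>" using Pr by auto
    moreover have "length \<alpha> = length (rev r)"
    proof -
      have "length \<alpha> = m" using P len by blast
      moreover have "length (rev r) = m" using Pr len by blast
      ultimately show ?thesis by simp
    qed
    ultimately have "ord_class.lexordp (rev \<alpha>) r" "ord_class.lexordp r (rev \<alpha>)" using lexless_rev by (metis rev_rev_ident)+
    then show False using lexordp_antisym by blast
  qed
  have "canon_out R \<gamma> A = rev r"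
    unfolding canon_out_def using Pr uniq by (rule the_equality)
  then show ?thesis using Pr by simp
qed

end


primrec outw :: "('v::linorder, 'a) bpa_rules \<Rightarrow> 'v list \<Rightarrow> 'v list" where
  "outw R [] = []"
| "outw R (A # w) = canon_out R w A @ outw R w"

definition prime_at :: "('v::linorder, 'a) bpa_rules \<Rightarrow> 'v list \<Rightarrow> 'v \<Rightarrow> bool" where
  "prime_at R u X \<longleftrightarrow> \<not> bbisim R (X # u) u \<and>
     (\<forall>\<alpha>. redfree R u \<alpha> \<and> bbisim R (\<alpha> @ u) (X # u) \<longrightarrow> length \<alpha> \<le> 1) \<and>
     (\<forall>Y. bbisim R (Y # u) (X # u) \<longrightarrow> \<not> Y < X)"

primrec normal :: "('v::linorder, 'a) bpa_rules \<Rightarrow> 'v list \<Rightarrow> bool" where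
  "normal R [] = True"
| "normal R (X # u) = (normal R u \<and> prime_at R u X)"

lemma normal_append:
  "(\<And>c' X \<zeta>. c = c' @ X # \<zeta> \<Longrightarrow> prime_at R (\<zeta> @ u) X) \<Longrightarrow> normal R u \<Longrightarrow> normal R (c @ u)"
proof (induction c)
  case Nil then show ?case by simp
next
  case (Cons X c)
  have "prime_at R (c @ u) X" using Cons.prems(1)[of "[]" X c] by simp
  moreover have "normal R (c @ u)"
    using Cons.IH Cons.prems by (metis append_Cons)
  ultimately show ?case by simp
qed

lemma tau_path_rt:
  "tau_path R (BB R) s t u \<Longrightarrow> Q s \<Longrightarrow>
   (\<lambda>x y. (\<exists>a. bpa_step R x a y) \<and> (\<exists>z. Q z \<and> bbisim R z y))\<^sup>*\<^sup>* t u"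
proof (induction rule: tau_path.induct)
  case (tp_refl t) then show ?case by simp
next
  case (tp_step t u u')
  have "bbisim R s u'" using tp_step(3) by (simp add: BB_def)
  then have r: "(\<lambda>x y. (\<exists>a. bpa_step R x a y) \<and> (\<exists>z. Q z \<and> bbisim R z y)) u u'"
    using tp_step(2,5) by blast
  have "(\<lambda>x y. (\<exists>a. bpa_step R x a y) \<and> (\<exists>z. Q z \<and> bbisim R z y))\<^sup>*\<^sup>* t u" using tp_step(4,5) by blast
  then show ?case using r by (rule rtranclp.rtrancl_into_rtrancl)
qed

lemma multi_match:
  "(\<lambda>x y. (\<exists>a. bpa_step R x a y) \<and> Q y)\<^sup>*\<^sup>* s s' \<Longrightarrow> Q s \<Longrightarrow>
   \<forall>t. bbisim R s t \<longrightarrow> (\<exists>t'. (\<lambda>x y. (\<exists>a. bpa_step R x a y) \<and> (\<exists>z. Q z \<and> bbisim R z y))\<^sup>*\<^sup>* t t' \<and> bbisim R s' t')"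
proof (induction rule: converse_rtranclp_induct)
  case base then show ?case by blast
next
  case (step s s1)
  show ?case
  proof (intro allI impI)
    fix t assume st: "bbisim R s t"
    from step obtain a where a: "bpa_step R s a s1" "Q s1" by blast
    have IH: "\<forall>t. bbisim R s1 t \<longrightarrow> (\<exists>t'. (\<lambda>x y. (\<exists>a. bpa_step R x a y) \<and> (\<exists>z. Q z \<and> bbisim R z y))\<^sup>*\<^sup>* t t' \<and> bbisim R s' t')"
      using step a by blast
    from match_BB[OF st a(1)] show "\<exists>t'. (\<lambda>x y. (\<exists>a. bpa_step R x a y) \<and> (\<exists>z. Q z \<and> bbisim R z y))\<^sup>*\<^sup>* t t' \<and> bbisim R s' t'"
    proof
      assume "a = None \<and> bbisim R s1 t" then show ?thesis using IH by blast
    next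
      assume "\<exists>tk t'. tau_path R (BB R) s t tk \<and> bpa_step R tk a t' \<and> bbisim R s1 t'"
      then obtain tk t'' where k: "tau_path R (BB R) s t tk" "bpa_step R tk a t''" "bbisim R s1 t''" by blast
      have p1: "(\<lambda>x y. (\<exists>a. bpa_step R x a y) \<and> (\<exists>z. Q z \<and> bbisim R z y))\<^sup>*\<^sup>* t tk"
        using tau_path_rt[OF k(1)] step by blast
      have p2: "(\<lambda>x y. (\<exists>a. bpa_step R x a y) \<and> (\<exists>z. Q z \<and> bbisim R z y)) tk t''"
        using k a by blast
      obtain t' where t': "(\<lambda>x y. (\<exists>a. bpa_step R x a y) \<and> (\<exists>z. Q z \<and> bbisim R z y))\<^sup>*\<^sup>* t'' t'" "bbisim R s' t'"
        using IH k(3) by blast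
      have "(\<lambda>x y. (\<exists>a. bpa_step R x a y) \<and> (\<exists>z. Q z \<and> bbisim R z y))\<^sup>*\<^sup>* t t'"
        using rtranclp_trans[OF rtranclp.rtrancl_into_rtrancl[OF p1 p2] t'(1)] .
      then show ?thesis using t'(2) by blast
    qed
  qed
qed

lemma PATH:
  "(\<lambda>x y. (\<exists>a. bpa_step R x a y) \<and> P y)\<^sup>*\<^sup>* x0 t' \<Longrightarrow> x0 = \<delta> @ \<gamma> \<Longrightarrow> P x0 \<Longrightarrow>
   ((\<exists>\<delta>'. t' = \<delta>' @ \<gamma>) \<or> P \<gamma>) \<and> P t'"
proof (induction rule: rtranclp_induct)
  case base then show ?case by blast
next
  case (step y z)
  then have IH: "(\<exists>\<delta>'. y = \<delta>' @ \<gamma>) \<or> P \<gamma>" "P y" by blast+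
  from step obtain a where a: "bpa_step R y a z" "P z" by blast
  from IH(1) show ?case
  proof
    assume "\<exists>\<delta>'. y = \<delta>' @ \<gamma>"
    then obtain \<delta>' where d: "y = \<delta>' @ \<gamma>" by blast
    show ?thesis
    proof (cases \<delta>')
      case Nil then show ?thesis using d IH(2) a by simp
    next
      case (Cons B \<delta>'')
      then obtain \<sigma> where "z = (\<sigma> @ \<delta>'') @ \<gamma>" using a d by (auto simp: step_Cons)
      then show ?thesis using a by blast
    qed
  next
    assume "P \<gamma>" then show ?thesis using a by blast
  qed
qed

lemma lift_Q:
  "(\<lambda>x y. \<exists>a. bpa_step R x a y)\<^sup>*\<^sup>* x y \<Longrightarrow>
   (\<lambda>x y. (\<exists>a. bpa_step R x a y) \<and> (\<exists>\<eta>. y = \<eta> @ v))\<^sup>*\<^sup>* (x @ v) (y @ v)"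
proof (induction rule: rtranclp_induct)
  case base then show ?case by simp
next
  case (step y z)
  then obtain a where "bpa_step R y a z" by blast
  then have "bpa_step R (y @ v) a (z @ v)" by (rule step_append)
  then have "(\<lambda>x y. (\<exists>a. bpa_step R x a y) \<and> (\<exists>\<eta>. y = \<eta> @ v)) (y @ v) (z @ v)" by blast
  with step.IH show ?case by (rule rtranclp.rtrancl_into_rtrancl)
qed

context
  fixes R :: "('v::{finite,linorder}, 'a) bpa_rules"
  assumes nR: "normed R"
begin

lemma lemmaD:
  assumes h: "bbisim R (\<delta>0 @ u1) (\<beta> @ v1)" and le: "nrm R u1 \<le> nrm R v1"
  shows "\<exists>\<delta>. bbisim R v1 (\<delta> @ u1)"
proof -
  let ?Q = "\<lambda>y. \<exists>\<eta>. y = \<eta> @ v1"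
  let ?P = "\<lambda>y. \<exists>z. ?Q z \<and> bbisim R z y"
  have p: "(\<lambda>x y. (\<exists>a. bpa_step R x a y) \<and> ?Q y)\<^sup>*\<^sup>* (\<beta> @ v1) ([] @ v1)"
    using lift_Q[OF normed_reach[OF nR, of \<beta>], of v1] by simp
  obtain t' where t': "(\<lambda>x y. (\<exists>a. bpa_step R x a y) \<and> ?P y)\<^sup>*\<^sup>* (\<delta>0 @ u1) t'" "bbisim R ([] @ v1) t'"
    using multi_match[OF p] bb_sym[OF h] by blast
  have "?P (\<delta>0 @ u1)" using bb_sym[OF h] by blast
  then have "(\<exists>\<delta>'. t' = \<delta>' @ u1) \<or> ?P u1" using PATH[OF t'(1) refl] by blast
  then show ?thesis
  proof
    assume "\<exists>\<delta>'. t' = \<delta>' @ u1" then show ?thesis using t'(2) by auto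
  next
    assume "?P u1"
    then obtain \<eta> where e: "bbisim R (\<eta> @ v1) u1" by blast
    have "nrm R (\<eta> @ v1) = nrm R u1" using nrm_sim[OF nR e] .
    moreover have "nrm R v1 \<le> nrm R (\<eta> @ v1)" using nrm_append_ge[OF nR] .
    ultimately have "nrm R (\<eta> @ v1) = nrm R v1" using le by simp
    then have ev: "bbisim R (\<eta> @ v1) v1" using nrm_eq_sim[OF nR] by blast
    have "bbisim R v1 u1" using bb_trans[OF bb_sym[OF ev] e] .
    then show ?thesis by (intro exI[where x="[]"]) simp
  qed
qed

lemma reduce: "\<exists>\<delta>'. redfree R \<gamma> \<delta>' \<and> bbisim R (\<delta>' @ \<gamma>) (\<delta> @ \<gamma>)"
proof (induction \<delta>)
  case Nil then show ?case by (intro exI[where x="[]"]) (simp add: bb_refl)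
next
  case (Cons Z \<delta>1)
  then obtain d where d: "redfree R \<gamma> d" "bbisim R (d @ \<gamma>) (\<delta>1 @ \<gamma>)" by blast
  have z: "bbisim R ([Z] @ d @ \<gamma>) ([Z] @ \<delta>1 @ \<gamma>)" using bb_left d(2) by blast
  show ?case
  proof (cases "bbisim R (Z # d @ \<gamma>) (d @ \<gamma>)")
    case True
    have "bbisim R (Z # d @ \<gamma>) (Z # \<delta>1 @ \<gamma>)" using z by simp
    then have "bbisim R (d @ \<gamma>) (Z # \<delta>1 @ \<gamma>)" using bb_trans[OF bb_sym[OF True]] by blast
    then show ?thesis using d by auto
  next
    case False
    then have "redfree R \<gamma> (Z # d)" using d by (simp add: redfree_Cons)
    then show ?thesis using z by auto
  qed
qed

lemma prime_not_Nil: "prime_at R v1 Y \<Longrightarrow> \<not> bbisim R [] (Y # v1)"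
proof
  assume p: "prime_at R v1 Y" and h: "bbisim R [] (Y # v1)"
  have "nrm R ([Y] @ v1) = nrm R ([] @ [])" using nrm_sim[OF nR h] by simp
  moreover have "nrm R ([] @ []) \<le> nrm R (v1 @ [])" using nrm_append_ge[OF nR, of "[]" v1] by simp
  moreover have "nrm R v1 \<le> nrm R ([Y] @ v1)" using nrm_append_ge[OF nR] .
  ultimately have "nrm R ([Y] @ v1) = nrm R v1" by simp
  then have "bbisim R ([Y] @ v1) v1" using nrm_eq_sim[OF nR] by blast
  then show False using p by (simp add: prime_at_def)
qed

lemma core:
  assumes pX: "prime_at R u1 X" and pY: "prime_at R v1 Y"
    and h: "bbisim R (X # u1) (Y # v1)" and le: "nrm R u1 \<le> nrm R v1"
  shows "bbisim R v1 u1"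
proof -
  obtain \<delta> where d: "bbisim R v1 (\<delta> @ u1)" using lemmaD[of "[X]" u1 "[Y]" v1] h le by auto
  obtain \<delta>' where d': "redfree R u1 \<delta>'" "bbisim R (\<delta>' @ u1) (\<delta> @ u1)" using reduce by blast
  have vd: "bbisim R v1 (\<delta>' @ u1)" using d d' bb_sym bb_trans by blast
  show ?thesis
  proof (cases \<delta>')
    case Nil then show ?thesis using vd by simp
  next
    case (Cons Z \<delta>'')
    have yy: "bbisim R ([Y] @ v1) ([Y] @ \<delta>' @ u1)" using bb_left vd by blast
    have nY: "\<not> bbisim R (Y # v1) v1" using pY by (simp add: prime_at_def)
    have "\<not> bbisim R (Y # \<delta>' @ u1) (\<delta>' @ u1)"
    proof
      assume "bbisim R (Y # \<delta>' @ u1) (\<delta>' @ u1)"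
      then have "bbisim R ([Y] @ \<delta>' @ u1) v1" using bb_sym[OF vd] bb_trans by auto
      then have "bbisim R ([Y] @ v1) v1" using yy bb_trans by blast
      then have "bbisim R (Y # v1) v1" by simp
      then show False using nY by simp
    qed
    then have "redfree R u1 (Y # \<delta>')" using d' by (simp add: redfree_Cons)
    moreover have "bbisim R ((Y # \<delta>') @ u1) (X # u1)" using yy h by simp (meson bb_sym bb_trans)
    ultimately have "length (Y # \<delta>') \<le> 1" using pX unfolding prime_at_def by blast
    then show ?thesis using Cons by simp
  qed
qed

lemma normal_unique: "normal R u \<Longrightarrow> normal R v \<Longrightarrow> bbisim R u v \<Longrightarrow> u = v"
proof (induction u arbitrary: v)
  case Nil
  then show ?case using prime_not_Nil by (cases v) auto
next
  case (Cons X u1)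
  show ?case
  proof (cases v)
    case Nil
    then have "bbisim R [] (X # u1)" using Cons.prems(3) bb_sym[of R "X # u1" "[]"] by simp
    moreover have "prime_at R u1 X" using Cons.prems(1) by simp
    ultimately show ?thesis using prime_not_Nil by blast
  next
    case (Cons Y v1)
    have pX: "prime_at R u1 X" "normal R u1" using Cons.prems by auto
    have pY: "prime_at R v1 Y" "normal R v1" using Cons.prems Cons by auto
    have h: "bbisim R (X # u1) (Y # v1)" using Cons.prems Cons by simp
    have "bbisim R v1 u1"
    proof (cases "nrm R u1 \<le> nrm R v1")
      case True then show ?thesis using core[OF pX(1) pY(1) h] by blast
    next
      case False then show ?thesis using core[OF pY(1) pX(1) bb_sym[OF h]] bb_sym by simp
    qed
    then have u1v1: "u1 = v1" using Cons.IH pX pY bb_sym by blast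
    have "bbisim R (Y # u1) (X # u1)" using bb_sym[OF h] u1v1 by simp
    then have "\<not> Y < X" using pX(1) unfolding prime_at_def by blast
    moreover have "bbisim R (X # v1) (Y # v1)" using h u1v1 by simp
    then have "\<not> X < Y" using pY(1) unfolding prime_at_def by blast
    ultimately have "X = Y" by simp
    then show ?thesis using Cons u1v1 by simp
  qed
qed

lemma canon_delta_Rset: "canon_delta R (Rset R \<gamma>) A = (Rset R (A # \<gamma>), canon_out R \<gamma> A)"
proof -
  let ?g = "SOME \<gamma>'. Rset R \<gamma>' = Rset R \<gamma>"
  have g: "Rset R ?g = Rset R \<gamma>" by (rule someI) (rule refl)
  have "Rset R (A # ?g) = Rset R (A # \<gamma>)" using Rset_Cons[OF nR g] .
  moreover have "canon_out R ?g A = canon_out R \<gamma> A" using canon_out_eq[OF nR g] .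
  ultimately show ?thesis unfolding canon_delta_def Let_def by simp
qed

lemma trans_run_eq: "trans_run R (Rset R []) w = (Rset R w, outw R w)"
  by (induction w) (simp_all add: canon_delta_Rset)

lemma canon_T_eq: "canon_T R w = outw R w"
  unfolding canon_T_def trans_run_eq by simp

lemma out_sim: "bbisim R (outw R w) w"
proof (induction w)
  case Nil then show ?case by (simp add: bb_refl)
next
  case (Cons A w)
  have c: "canon_out R w A \<in> out_cands R w A"
    using canon_out_spec[OF nR] by (auto simp: longest_cands_def)
  then have "bbisim R (canon_out R w A @ w) (A # w)" by (simp add: out_cands_def)
  moreover have "bbisim R (canon_out R w A @ outw R w) (canon_out R w A @ w)" using bb_left Cons.IH by blast
  ultimately show ?case by (simp add: bb_trans)
qed

lemma normal_step:
  assumes nu: "normal R u" and uw: "bbisim R u w"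
  shows "normal R (canon_out R w A @ u)"
proof -
  have RR: "Rset R w = Rset R u" using Rset_sim[OF nR bb_sym[OF uw]] .
  define c where "c = canon_out R u A"
  have cw: "canon_out R w A = c" unfolding c_def using canon_out_eq[OF nR RR] .
  have spec: "c \<in> longest_cands R u A" "\<forall>\<beta>\<in>longest_cands R u A. \<beta> \<noteq> c \<longrightarrow> lexless c \<beta>"
    using canon_out_spec[OF nR] unfolding c_def by blast+
  then have cc: "bbisim R (c @ u) (A # u)" "redfree R u c" "\<forall>\<beta>\<in>out_cands R u A. length \<beta> \<le> length c"
    by (auto simp: longest_cands_def out_cands_def)
  have "prime_at R (\<zeta> @ u) X" if ceq: "c = c' @ X # \<zeta>" for c' X \<zeta>
  proof -
    have rf: "redfree R (X # \<zeta> @ u) c'" "\<not> bbisim R (X # \<zeta> @ u) (\<zeta> @ u)" "redfree R u \<zeta>"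
      using cc(2) ceq by (auto simp: redfree_append redfree_Cons)
    have p2: "length \<alpha> \<le> 1" if a: "redfree R (\<zeta> @ u) \<alpha>" "bbisim R (\<alpha> @ \<zeta> @ u) (X # \<zeta> @ u)" for \<alpha>
    proof (rule ccontr)
      assume "\<not> length \<alpha> \<le> 1"
      let ?d = "c' @ \<alpha> @ \<zeta>"
      have "bbisim R (c' @ (\<alpha> @ \<zeta> @ u)) (c' @ (X # \<zeta> @ u))" using bb_left a(2) by blast
      then have "bbisim R (?d @ u) (A # u)" using cc(1) ceq by simp (meson bb_trans)
      moreover have "redfree R u ?d"
      proof -
        have "Rset R (X # \<zeta> @ u) = Rset R (\<alpha> @ \<zeta> @ u)" using Rset_sim[OF nR bb_sym[OF a(2)]] .
        then have "redfree R (\<alpha> @ \<zeta> @ u) c'" using rf(1) redfree_transfer[OF nR] by blast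
        then show ?thesis using a(1) rf(3) by (simp add: redfree_append)
      qed
      ultimately have "?d \<in> out_cands R u A" by (simp add: out_cands_def)
      then have "length ?d \<le> length c" using cc(3) by blast
      then show False using ceq \<open>\<not> length \<alpha> \<le> 1\<close> by simp
    qed
    have p3: "\<not> Y < X" if y: "bbisim R (Y # \<zeta> @ u) (X # \<zeta> @ u)" for Y
    proof
      assume YX: "Y < X"
      let ?d = "c' @ Y # \<zeta>"
      have "bbisim R (c' @ (Y # \<zeta> @ u)) (c' @ (X # \<zeta> @ u))" using bb_left y by blast
      then have "bbisim R (?d @ u) (A # u)" using cc(1) ceq by simp (meson bb_trans)
      moreover have "redfree R u ?d"
      proof -
        have "Rset R (X # \<zeta> @ u) = Rset R (Y # \<zeta> @ u)" using Rset_sim[OF nR bb_sym[OF y]] .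
        then have "redfree R (Y # \<zeta> @ u) c'" using rf(1) redfree_transfer[OF nR] by blast
        moreover have "\<not> bbisim R (Y # \<zeta> @ u) (\<zeta> @ u)" using rf(2) y by (meson bb_sym bb_trans)
        ultimately show ?thesis using rf(3) by (simp add: redfree_append redfree_Cons)
      qed
      ultimately have dc: "?d \<in> out_cands R u A" by (simp add: out_cands_def)
      have "length ?d = length c" using ceq by simp
      then have "?d \<in> longest_cands R u A" using dc cc(3) by (simp add: longest_cands_def)
      moreover have "?d \<noteq> c" using ceq YX by simp
      ultimately have l1: "lexless c ?d" using spec(2) by blast
      have l2: "lexless ?d c" unfolding lexless_def using ceq YX by blast
      have len: "length c = length ?d" using ceq by simp
      have "ord_class.lexordp (rev c) (rev ?d)" using l1 lexless_rev[OF len] by blast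
      moreover have "ord_class.lexordp (rev ?d) (rev c)" using l2 lexless_rev[OF len[symmetric]] by blast
      ultimately show False using lexordp_antisym by blast
    qed
    show ?thesis unfolding prime_at_def using rf(2) p2 p3 by blast
  qed
  then have "normal R (c @ u)" using normal_append nu by blast
  then show ?thesis using cw by simp
qed

lemma normal_out: "normal R (outw R w)"
proof (induction w)
  case Nil then show ?case by simp
next
  case (Cons A w)
  then show ?case using normal_step out_sim by simp
qed

end

theorem theorem4p7:
  fixes R :: "('v::{finite,linorder} \<times> 'a::finite option \<times> 'v list) set"
  assumes "finite R" and "normed R"
  shows "canon_T R \<alpha> = canon_T R \<beta> \<longleftrightarrow> bbisim R \<alpha> \<beta>"
proof
  assume "canon_T R \<alpha> = canon_T R \<beta>"
  then have "outw R \<alpha> = outw R \<beta>" using canon_T_eq[OF assms(2)] by simp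
  then show "bbisim R \<alpha> \<beta>" using out_sim[OF assms(2), of \<alpha>] out_sim[OF assms(2), of \<beta>]
    by (metis bb_sym bb_trans)
next
  assume h: "bbisim R \<alpha> \<beta>"
  have "bbisim R (outw R \<alpha>) (outw R \<beta>)" using out_sim[OF assms(2), of \<alpha>] out_sim[OF assms(2), of \<beta>] h
    by (meson bb_sym bb_trans)
  then have "outw R \<alpha> = outw R \<beta>" using normal_unique[OF assms(2) normal_out[OF assms(2)] normal_out[OF assms(2)]] by blast
  then show "canon_T R \<alpha> = canon_T R \<beta>" using canon_T_eq[OF assms(2)] by simp
qed


end
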